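(* Let $f(x_1)=c_0+c_1x_1+\cdots+c_dx_1^d\in\mathbb{C}[x_1]$ with $d\ge1$, $|c_i|\le1$ for all $i$, and $|c_0|=|c_d|=1$. Then $\mathrm{ArchNewt}(f)$ has exactly one lower edge, this edge is horizontal, $\mathrm{ArchTrop}(f)=\{0\}$, and $$\sup_{\sigma\in\mathrm{ArchTrop}(f)}\ \inf_{\rho\in\mathrm{Amoeba}(f)}|\rho-\sigma|\le\log\frac{\sqrt5+1}{2}<0.482.$$ Moreover, equality is attained for $f(x_1)=x_1^2-x_1-1$.
   Context: For $f(x_1)=\sum_ic_ix_1^{a_i}$ (only terms with $c_i\neq0$ counted), $\mathrm{ArchNewt}(f)=\mathrm{Conv}\{(a_i,-\log|c_i|): c_i\ne0\}\subset\mathbb{R}^2$; a lower edge is an edge having an outer normal of the form $(v,-1)$. $\mathrm{ArchTrop}(f)$ is the set of $v\in\mathbb{R}$ such that $(v,-1)$ is an outer normal of an edge of $\mathrm{ArchNewt}(f)$ (i.e. the set of slopes of lower edges). $\mathrm{Amoeba}(f)=\{\log|\zeta|:\zeta\in\mathbb{C}^*, f(\zeta)=0\}$. *)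

theory Defs
  imports "HOL-Analysis.Analysis" "HOL-Computational_Algebra.Polynomial"
begin

definition ArchNewt :: "complex poly \<Rightarrow> (real \<times> real) set" where
  "ArchNewt f = convex hull {(real i, - ln (cmod (coeff f i))) | i. coeff f i \<noteq> 0}"

definition outer_normal :: "(real \<times> real) set \<Rightarrow> (real \<times> real) set \<Rightarrow> real \<times> real \<Rightarrow> bool" where
  "outer_normal P E w \<longleftrightarrow> E = {x \<in> P. \<forall>y\<in>P. w \<bullet> y \<le> w \<bullet> x}"

definition is_edge :: "(real \<times> real) set \<Rightarrow> (real \<times> real) set \<Rightarrow> bool" where
  "is_edge P E \<longleftrightarrow> E face_of P \<and> aff_dim E = 1"

definition lower_edge :: "(real \<times> real) set \<Rightarrow> (real \<times> real) set \<Rightarrow> bool" where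
  "lower_edge P E \<longleftrightarrow> is_edge P E \<and> (\<exists>v. outer_normal P E (v, -1))"

definition horizontal :: "(real \<times> real) set \<Rightarrow> bool" where
  "horizontal E \<longleftrightarrow> (\<forall>x\<in>E. \<forall>y\<in>E. snd x = snd y)"

definition ArchTrop :: "complex poly \<Rightarrow> real set" where
  "ArchTrop f = {v. \<exists>E. is_edge (ArchNewt f) E \<and> outer_normal (ArchNewt f) E (v, -1)}"

definition Amoeba :: "complex poly \<Rightarrow> real set" where
  "Amoeba f = {ln (cmod z) | z. z \<noteq> 0 \<and> poly f z = 0}"

end

theory Submission
  imports Defs "HOL-Computational_Algebra.Fundamental_Theorem_Algebra"
begin


definition nsq :: "complex poly \<Rightarrow> real" where
  "nsq p = (\<Sum>i\<le>degree p. (cmod (coeff p i))^2)"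

lemma nsq_N: "degree p \<le> N \<Longrightarrow> (\<Sum>i\<le>N. (cmod (coeff p i))^2) = nsq p"
  unfolding nsq_def
  by (rule sum.mono_neutral_right) (auto simp: coeff_eq_0)

lemma pw: "(cmod ((u::complex) - b * v))^2 - (cmod (cnj b * u - v))^2 = ((cmod u)^2 - (cmod v)^2) * (1 - (cmod b)^2)"
  by (simp only: cmod_power2) (simp add: power2_eq_square algebra_simps)

lemma swap: "nsq ([:-b,1:]*q) = nsq ([:-1, cnj b:]*q)"
proof -
  define N where "N = Suc (degree q)"
  define u where "u i = coeff (pCons 0 q) i" for i
  define v where "v i = coeff q i" for i
  have c1: "coeff ([:-b,1:]*q) i = u i - b * v i" for i
    by (simp add: u_def v_def)
  have c2: "coeff ([:-1, cnj b:]*q) i = cnj b * u i - v i" for i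
    by (cases i) (simp_all add: u_def v_def)
  have d1: "degree ([:-b,1:]*q) \<le> N" unfolding N_def
    using degree_mult_le[of "[:-b,1:]" q] by simp
  have dd: "degree [:-1, cnj b:] \<le> 1" by (simp add: degree_pCons_eq_if)
  have d2: "degree ([:-1, cnj b:]*q) \<le> N" unfolding N_def
    using degree_mult_le[of "[:-1, cnj b:]" q] dd by linarith
  have su: "(\<Sum>i\<le>N. (cmod (u i))^2) = nsq q"
    unfolding N_def sum.atMost_Suc_shift by (simp add: u_def nsq_def)
  have sv: "(\<Sum>i\<le>N. (cmod (v i))^2) = nsq q"
    unfolding v_def by (rule nsq_N) (simp add: N_def)
  have "(\<Sum>i\<le>N. (cmod (u i - b * v i))^2) - (\<Sum>i\<le>N. (cmod (cnj b * u i - v i))^2)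
       = (\<Sum>i\<le>N. ((cmod (u i))^2 - (cmod (v i))^2) * (1 - (cmod b)^2))"
    by (simp add: sum_subtractf[symmetric] pw)
  also have "\<dots> = ((\<Sum>i\<le>N. (cmod (u i))^2) - (\<Sum>i\<le>N. (cmod (v i))^2)) * (1 - (cmod b)^2)"
    by (simp only: sum_subtractf[symmetric] sum_distrib_right)
  also have "\<dots> = 0" using su sv by simp
  finally have E: "(\<Sum>i\<le>N. (cmod (u i - b * v i))^2) = (\<Sum>i\<le>N. (cmod (cnj b * u i - v i))^2)"
    by simp
  have "nsq ([:-b,1:]*q) = (\<Sum>i\<le>N. (cmod (coeff ([:-b,1:]*q) i))^2)" by (rule nsq_N[OF d1, symmetric])
  also have "\<dots> = (\<Sum>i\<le>N. (cmod (u i - b * v i))^2)" by (simp only: c1)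
  also have "\<dots> = (\<Sum>i\<le>N. (cmod (cnj b * u i - v i))^2)" by (rule E)
  also have "\<dots> = (\<Sum>i\<le>N. (cmod (coeff ([:-1, cnj b:]*q) i))^2)" by (simp only: c2)
  also have "\<dots> = nsq ([:-1, cnj b:]*q)" by (rule nsq_N[OF d2])
  finally show ?thesis .
qed

definition T :: "complex \<Rightarrow> complex poly" where
  "T z = (if cmod z > 1 then [:-1, cnj z:] else [:-z,1:])"

lemma prodswap: "nsq (q * prod_list (map (\<lambda>z. [:-z,1:]) xs)) = nsq (q * prod_list (map T xs))"
proof (induction xs arbitrary: q)
  case Nil
  then show ?case by simp
next
  case (Cons b xs)
  have "nsq (q * prod_list (map (\<lambda>z. [:-z,1:]) (b#xs))) = nsq ((q*[:-b,1:]) * prod_list (map (\<lambda>z. [:-z,1:]) xs))"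
    by (simp only: list.map prod_list.Cons mult_ac)
  also have "\<dots> = nsq ((q*[:-b,1:]) * prod_list (map T xs))" by (rule Cons.IH)
  also have "\<dots> = nsq ([:-b,1:] * (q * prod_list (map T xs)))" by (simp only: mult_ac)
  also have "\<dots> = nsq (T b * (q * prod_list (map T xs)))"
  proof (cases "cmod b > 1")
    case True
    then have "T b = [:-1, cnj b:]" by (simp add: T_def)
    then show ?thesis by (simp only: swap)
  next
    case False
    then have "T b = [:-b, 1:]" by (simp add: T_def)
    then show ?thesis by (simp only:)
  qed
  also have "\<dots> = nsq (q * prod_list (map T (b#xs)))" by (simp only: list.map prod_list.Cons mult_ac)
  finally show ?case .
qed

lemma decomp: "\<exists>xs. (p::complex poly) = smult (lead_coeff p) (prod_list (map (\<lambda>z. [:-z,1:]) xs))"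
proof -
  obtain xs where xs: "mset xs = proots p" using ex_mset by blast
  have "(\<Prod>x\<in>#proots p. [:-x, 1:]) = prod_list (map (\<lambda>z. [:-z,1:]) xs)"
    unfolding xs[symmetric] by (simp add: mset_map[symmetric] prod_mset_prod_list del: mset_map)
  then show ?thesis using complex_poly_decompose_multiset[of p] by metis
qed

lemma deg_pl: "(\<forall>z\<in>set xs. degree (g z) = 1) \<Longrightarrow> degree (prod_list (map g xs) :: complex poly) = length xs"
proof (induction xs)
  case Nil then show ?case by simp
next
  case (Cons a xs)
  have "g a \<noteq> 0" using Cons.prems by auto
  moreover have "prod_list (map g xs) \<noteq> 0" using Cons by auto
  ultimately show ?case using Cons by (simp add: degree_mult_eq)
qed

lemma lead_pl: "lead_coeff (prod_list (map g xs) :: complex poly) = prod_list (map (\<lambda>z. lead_coeff (g z)) xs)"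
  by (induction xs) (simp_all add: lead_coeff_mult)

lemma poly_pl: "poly (prod_list (map g xs)) x = prod_list (map (\<lambda>z. poly (g z) x) xs)"
  by (induction xs) simp_all

lemma cmod_pl: "cmod (prod_list (map g xs)) = prod_list (map (\<lambda>z. cmod (g z)) xs)"
  by (induction xs) (simp_all add: norm_mult)

lemma pl_mult: "prod_list (map (\<lambda>z. g z * h z) xs) = prod_list (map g xs) * (prod_list (map h xs) :: real)"
  by (induction xs) (simp_all add: mult_ac)

lemma pl_div: "prod_list (map (\<lambda>z. g z / h z) xs) = prod_list (map g xs) / (prod_list (map h xs) :: real)"
  by (induction xs) simp_all

lemma pl_gt: "(\<forall>z\<in>set xs. g z > p) \<Longrightarrow> p \<ge> 1 \<Longrightarrow> prod_list (map g xs) \<ge> (p::real) ^ length xs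
   \<and> (xs \<noteq> [] \<longrightarrow> prod_list (map g xs) > p ^ length xs)"
proof (induction xs)
  case Nil then show ?case by simp
next
  case (Cons a xs)
  then have h: "g a > p" "prod_list (map g xs) \<ge> p ^ length xs" by auto
  have "p ^ length xs > 0" using Cons.prems by simp
  then have "g a * prod_list (map g xs) > p * p ^ length xs"
    using h mult_strict_mono'[of p "g a" "p ^ length xs" "prod_list (map g xs)"] Cons.prems
    by (smt (verit) mult_less_cancel_right mult_strict_mono)
  then show ?case by simp
qed



lemma ip: "((v::real),(w::real)) \<bullet> x = v * fst x + w * snd x"
  by (cases x) (simp add: inner_real_def)

lemma geom:
  fixes f :: "complex poly" and d :: nat
  assumes deg: "degree f = d" and d1: "d \<ge> 1"
    and cb: "\<forall>i. cmod (coeff f i) \<le> 1"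
    and c0: "cmod (coeff f 0) = 1" and cd: "cmod (coeff f d) = 1"
  shows "(\<exists>!E. lower_edge (ArchNewt f) E)
    \<and> (\<forall>E. lower_edge (ArchNewt f) E \<longrightarrow> horizontal E)
    \<and> ArchTrop f = {0}"
proof -
  define S where "S = {(real i, - ln (cmod (coeff f i))) | i. coeff f i \<noteq> 0}"
  define P where "P = ArchNewt f"
  have P_def': "P = convex hull S" unfolding P_def S_def ArchNewt_def by simp
  define Q where "Q = {x::real\<times>real. 0 \<le> fst x \<and> fst x \<le> real d \<and> 0 \<le> snd x}"
  have SQ: "S \<subseteq> Q"
  proof
    fix x assume "x \<in> S"
    then obtain i where x: "x = (real i, - ln (cmod (coeff f i)))" and nz: "coeff f i \<noteq> 0"
      unfolding S_def by blast
    have "i \<le> d" using nz deg le_degree by blast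
    moreover have "ln (cmod (coeff f i)) \<le> 0" using cb nz by simp
    ultimately show "x \<in> Q" unfolding Q_def x by simp
  qed
  have "convex Q" unfolding convex_def Q_def
    by (auto intro!: add_nonneg_nonneg mult_nonneg_nonneg convex_bound_le)
  then have PQ: "P \<subseteq> Q" unfolding P_def' using SQ by (simp add: hull_minimal)
  have cvx: "convex P" unfolding P_def' by simp
  have "coeff f 0 \<noteq> 0" using c0 by auto
  then have "(0,0) \<in> S" unfolding S_def using c0
    by (auto intro!: exI[of _ 0])
  then have z0: "(0,0) \<in> P" unfolding P_def' by (simp add: hull_inc)
  have "coeff f d \<noteq> 0" using cd by auto
  then have "(real d,0) \<in> S" unfolding S_def using cd
    by (auto intro!: exI[of _ d])
  then have zd: "(real d,0) \<in> P" unfolding P_def' by (simp add: hull_inc)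
  define Ev where "Ev v = {x\<in>P. \<forall>y\<in>P. (v,-1) \<bullet> y \<le> (v,-1) \<bullet> x}" for v :: real
  define E0 where "E0 = closed_segment (0,0) (real d, 0::real)"
  have seg: "closed_segment (0,0) (real d, 0::real) \<subseteq> P"
    using cvx z0 zd by (simp add: closed_segment_subset)
  have Ev0: "Ev 0 = E0"
  proof
    show "Ev 0 \<subseteq> E0"
    proof
      fix x assume "x \<in> Ev 0"
      then have xP: "x \<in> P" and m: "\<forall>y\<in>P. (0::real,-1) \<bullet> y \<le> (0,-1) \<bullet> x" unfolding Ev_def by auto
      from m z0 have "snd x \<le> 0" by (cases x) (auto simp: ip)
      with xP PQ have x0: "snd x = 0" and a: "0 \<le> fst x" "fst x \<le> real d" unfolding Q_def by auto
      have "x = (1 - fst x / real d) *\<^sub>R (0,0) + (fst x / real d) *\<^sub>R (real d, 0)"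
        using x0 d1 by (cases x) auto
      moreover have "0 \<le> fst x / real d" "fst x / real d \<le> 1" using a d1 by auto
      ultimately show "x \<in> E0" unfolding E0_def closed_segment_def by blast
    qed
  next
    show "E0 \<subseteq> Ev 0"
    proof
      fix x assume x: "x \<in> E0"
      then have "x \<in> P" using seg E0_def by auto
      moreover from x have "snd x = 0" unfolding E0_def closed_segment_def by auto
      moreover have "\<forall>y\<in>P. 0 \<le> snd y" using PQ Q_def by auto
      ultimately show "x \<in> Ev 0" unfolding Ev_def by (auto simp: ip)
    qed
  qed
  have Evpos: "Ev v = {(real d, 0)}" if v: "v > 0" for v
  proof
    show "Ev v \<subseteq> {(real d, 0)}"
    proof
      fix x assume "x \<in> Ev v"
      then have xP: "x \<in> P" and m: "\<forall>y\<in>P. (v,-1) \<bullet> y \<le> (v,-1) \<bullet> x" unfolding Ev_def by auto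
      from m zd have h0: "v * real d \<le> v * fst x - snd x" by (cases x) (auto simp: ip)
      from xP PQ have h1: "fst x \<le> real d" and h2: "0 \<le> snd x" unfolding Q_def by auto
      have h3: "v * fst x \<le> v * real d" using h1 v by simp
      have "v * real d \<le> v * fst x" using h0 h2 by linarith
      then have "real d \<le> fst x" using v by simp
      then have "fst x = real d" "snd x = 0" using h0 h1 h2 h3 by linarith+
      then show "x \<in> {(real d, 0)}" by (cases x) auto
    qed
  next
    show "{(real d, 0)} \<subseteq> Ev v"
    proof -
      have "\<forall>y\<in>P. v * fst y - snd y \<le> v * real d"
      proof
        fix y assume "y \<in> P"
        then have "fst y \<le> real d" "0 \<le> snd y" using PQ unfolding Q_def by auto
        moreover then have "v * fst y \<le> v * real d" using v by simp
        ultimately show "v * fst y - snd y \<le> v * real d" by linarith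
      qed
      then show ?thesis using zd unfolding Ev_def by (auto simp: ip)
    qed
  qed
  have Evneg: "Ev v = {(0, 0)}" if v: "v < 0" for v
  proof
    show "Ev v \<subseteq> {(0, 0)}"
    proof
      fix x assume "x \<in> Ev v"
      then have xP: "x \<in> P" and m: "\<forall>y\<in>P. (v,-1) \<bullet> y \<le> (v,-1) \<bullet> x" unfolding Ev_def by auto
      from m z0 have h0: "0 \<le> v * fst x - snd x" by (cases x) (auto simp: ip)
      from xP PQ have h1: "0 \<le> fst x" and h2: "0 \<le> snd x" unfolding Q_def by auto
      have h3: "v * fst x \<le> 0" using h1 v by (simp add: mult_nonpos_nonneg)
      have "0 \<le> v * fst x" using h0 h2 by linarith
      then have "fst x \<le> 0" using v by (simp add: zero_le_mult_iff)
      then have "fst x = 0" "snd x = 0" using h0 h1 h2 h3 by linarith+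
      then show "x \<in> {(0, 0)}" by (cases x) auto
    qed
  next
    show "{(0, 0)} \<subseteq> Ev v"
    proof -
      have "\<forall>y\<in>P. v * fst y - snd y \<le> 0"
      proof
        fix y assume "y \<in> P"
        then have "0 \<le> fst y" "0 \<le> snd y" using PQ unfolding Q_def by auto
        moreover then have "v * fst y \<le> 0" using v by (simp add: mult_nonpos_nonneg)
        ultimately show "v * fst y - snd y \<le> 0" by linarith
      qed
      then show ?thesis using z0 unfolding Ev_def by (auto simp: ip)
    qed
  qed
  have affE0: "aff_dim E0 = 1" unfolding E0_def segment_convex_hull aff_dim_convex_hull
    using d1 by simp
  have faceE0: "E0 face_of P"
  proof -
    have "P \<inter> {x. (0::real,-1::real) \<bullet> x = 0} face_of P"
      using cvx PQ by (intro face_of_Int_supporting_hyperplane_le) (auto simp: Q_def ip)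
    moreover have "P \<inter> {x. (0::real,-1::real) \<bullet> x = 0} = Ev 0"
      using PQ z0 unfolding Ev_def Q_def by (force simp: ip)
    ultimately show ?thesis using Ev0 by simp
  qed
  have edgeE0: "is_edge P E0" unfolding is_edge_def using faceE0 affE0 by simp
  have on: "outer_normal P E (v,-1) \<longleftrightarrow> E = Ev v" for E v
    unfolding outer_normal_def Ev_def by simp
  have key: "is_edge P E \<and> outer_normal P E (v,-1) \<longleftrightarrow> E = E0 \<and> v = 0" for E v
  proof
    assume h: "is_edge P E \<and> outer_normal P E (v,-1)"
    then have E: "E = Ev v" using on by simp
    have "aff_dim E = 1" using h is_edge_def by simp
    then have "v = 0" using E Evpos Evneg by (metis aff_dim_sing linorder_neqE_linordered_idom zero_neq_one)
    then show "E = E0 \<and> v = 0" using E Ev0 by simp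
  next
    assume "E = E0 \<and> v = 0"
    then show "is_edge P E \<and> outer_normal P E (v,-1)" using edgeE0 on Ev0 by simp
  qed
  have le: "lower_edge P E \<longleftrightarrow> E = E0" for E
    unfolding lower_edge_def using key by (metis edgeE0 on Ev0)
  have hor: "horizontal E0" unfolding horizontal_def E0_def closed_segment_def by auto
  have AT: "ArchTrop f = {0}" unfolding ArchTrop_def P_def[symmetric] using key by auto
  show ?thesis unfolding P_def[symmetric] using le hor AT by auto
qed



lemma phi: fixes p :: real defines "p \<equiv> (sqrt 5 + 1) / 2"
  shows "p^2 = p + 1" "p > 1.6" "p * (p - 1) = 1" "2 * p - 1 = sqrt 5"
proof -
  have s: "sqrt 5 ^ 2 = (5::real)" by simp
  have "(2.2::real) < sqrt 5" by (rule real_less_rsqrt) (simp add: power2_eq_square)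
  then show "p > 1.6" unfolding p_def by simp
  show "p^2 = p + 1" unfolding p_def using s by (simp add: power2_eq_square field_simps)
  then show "p * (p - 1) = 1" by (simp add: power2_eq_square algebra_simps)
  show "2 * p - 1 = sqrt 5" unfolding p_def by (simp add: field_simps)
qed

lemma xinv_strict: fixes a t :: real assumes "1 \<le> a" "a < t" shows "a + 1/a < t + 1/t"
proof -
  have at: "a * t > 1" using assms by (smt (verit) mult_less_cancel_left1)
  have "(t + 1/t) - (a + 1/a) = (t - a) * (a*t - 1) / (a*t)"
    using assms by (simp add: field_simps)
  moreover have "(t - a) * (a*t - 1) / (a*t) > 0" using at assms by simp
  ultimately show ?thesis by linarith
qed

lemma pow_ge: fixes p :: real assumes "p > 1.6" "p^3 \<ge> 4" "n \<ge> 3" shows "p ^ n \<ge> real n + 1"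
  using assms(3)
proof (induction n rule: nat_induct_at_least)
  case base then show ?case using assms by simp
next
  case (Suc n)
  have "p ^ Suc n = p * p ^ n" by simp
  have "p ^ n \<ge> real n + 1" using Suc by simp
  have "1.6 * (real n + 1) \<le> p * (real n + 1)" using assms(1) by (intro mult_right_mono) auto
  also have "\<dots> \<le> p * p ^ n" using \<open>p ^ n \<ge> real n + 1\<close> assms(1) by (intro mult_left_mono) auto
  finally have "p * p ^ n \<ge> 1.6 * (real n + 1)" .
  then show ?case using Suc by simp
qed

lemma arith_contra:
  fixes t :: real assumes t: "t > ((sqrt 5 + 1) / 2) ^ d" and d: "d \<ge> 1" and le: "t + 1/t \<le> real d + 1"
  shows False
proof -
  define p where "p = (sqrt 5 + 1) / 2"
  note ph = phi[folded p_def]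
  have tp: "t > p ^ d" using t unfolding p_def .
  show False
  proof (cases "d \<ge> 3")
    case True
    have "p^3 = p * p^2" by (simp add: power3_eq_cube power2_eq_square)
    also have "\<dots> = p * (p + 1)" using ph(1) by simp
    also have "\<dots> = p^2 + p" by (simp add: algebra_simps power2_eq_square)
    finally have "p^3 = 2*p + 1" using ph(1) by simp
    then have "p^3 \<ge> 4" using ph(2) by simp
    then have "p ^ d \<ge> real d + 1" using pow_ge ph(2) True by blast
    moreover have "t > 0"
    proof -
      have "p ^ d > 0" using ph(2) by simp
      then show ?thesis using tp by linarith
    qed
    ultimately show False using tp le by (smt (verit) divide_pos_pos)
  next
    case False
    then have "d = 1 \<or> d = 2" using d by auto
    then show False
    proof
      assume d1: "d = 1"
      have "p + 1/p < t + 1/t" using tp d1 ph(2) by (intro xinv_strict) auto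
      moreover have "1/p = p - 1" using ph(3) ph(2) by (simp add: field_simps)
      moreover have "sqrt 5 > (2::real)" by (rule real_less_rsqrt) simp
      ultimately show False using le d1 ph(4) by simp
    next
      assume d2: "d = 2"
      have "p^2 + 1/p^2 < t + 1/t" using tp d2 ph(2) ph(1) by (intro xinv_strict) auto
      moreover have "1/p^2 = 2 - p"
      proof -
        have "(2 - p) * p^2 = (2 - p) * (p + 1)" using ph(1) by simp
        also have "\<dots> = 2 + p - p^2" by (simp add: algebra_simps power2_eq_square)
        finally have "(2 - p) * p^2 = 1" using ph(1) by simp
        then show ?thesis using ph(2) by (simp add: field_simps)
      qed
      ultimately show False using le d2 ph(1) by simp
    qed
  qed
qed



lemma root_exists:
  fixes f :: "complex poly" and d :: nat
  assumes deg: "degree f = d" and d1: "d \<ge> 1"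
    and cb: "\<forall>i. cmod (coeff f i) \<le> 1"
    and c0: "cmod (coeff f 0) = 1" and cd: "cmod (coeff f d) = 1"
  shows "\<exists>z. z \<noteq> 0 \<and> poly f z = 0 \<and> \<bar>ln (cmod z)\<bar> \<le> ln ((sqrt 5 + 1) / 2)"
proof (rule ccontr)
  assume H: "\<not> ?thesis"
  define p where "p = (sqrt 5 + 1) / 2"
  note ph = phi[folded p_def]
  have p1: "p > 1" using ph(2) by simp
  define c where "c = lead_coeff f"
  have cc: "c = coeff f d" using deg c_def by simp
  have cm: "cmod c = 1" using cc cd by simp
  have cnz: "c \<noteq> 0" using cm by auto
  obtain xs where f: "f = smult c (prod_list (map (\<lambda>z. [:-z,1:]) xs))"
    using decomp[of f] c_def by blast
  have f0: "poly f 0 \<noteq> 0" using c0 by (auto simp: poly_0_coeff_0)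
  have rootx: "poly f z = 0" if "z \<in> set xs" for z
  proof -
    have "0 \<in> set (map (\<lambda>w. poly [:-w,1:] z) xs)" using that by force
    then show ?thesis by (subst f) (simp add: poly_pl prod_list_zero_iff)
  qed
  have out: "cmod z > p \<or> cmod z < 1/p" and znz: "z \<noteq> 0" if "z \<in> set xs" for z
  proof -
    show "z \<noteq> 0" using rootx[OF that] f0 by auto
    then have cz: "cmod z > 0" by simp
    from H rootx[OF that] \<open>z \<noteq> 0\<close> have "\<bar>ln (cmod z)\<bar> > ln p" unfolding p_def by force
    then have "ln (cmod z) > ln p \<or> ln (cmod z) < ln (1/p)" using p1 by (auto simp: ln_div)
    then show "cmod z > p \<or> cmod z < 1/p" using cz p1 by auto
  qed
  have dlin: "\<forall>z\<in>set xs. degree [:-z, 1::complex:] = 1" by simp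
  have len: "length xs = d"
    using deg f cnz deg_pl[OF dlin] by simp
  define F where "F = smult c (prod_list (map T xs))"
  have nsqF: "nsq f = nsq F"
  proof -
    have "nsq f = nsq ([:c:] * prod_list (map (\<lambda>z. [:-z,1:]) xs))" using f by simp
    also have "\<dots> = nsq ([:c:] * prod_list (map T xs))" by (rule prodswap)
    also have "\<dots> = nsq F" unfolding F_def by simp
    finally show ?thesis .
  qed
  have Tdeg: "\<forall>z\<in>set xs. degree (T z) = 1"
  proof
    fix z assume "z \<in> set xs"
    then have "z \<noteq> 0" by (rule znz)
    then show "degree (T z) = 1" by (simp add: T_def)
  qed
  have degF: "degree F = d" unfolding F_def using cnz deg_pl[OF Tdeg] len by simp
  define g1 where "g1 z = (if cmod z > 1 then cmod z else 1)" for z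
  define g2 where "g2 z = (if cmod z > 1 then 1 else cmod z)" for z
  define A where "A = prod_list (map g1 xs)"
  define B where "B = prod_list (map g2 xs)"
  have leadT: "(\<lambda>z. cmod (lead_coeff (T z))) = g1"
    by (rule ext) (simp add: T_def g1_def)
  have polyT: "(\<lambda>z. cmod (poly (T z) 0)) = g2"
    by (rule ext) (simp add: T_def g2_def)
  have FA: "cmod (coeff F d) = A"
  proof -
    have "degree (prod_list (map T xs)) = d" using deg_pl[OF Tdeg] len by simp
    then have "coeff F d = c * lead_coeff (prod_list (map T xs))" using F_def by simp
    then have "cmod (coeff F d) = cmod (prod_list (map (\<lambda>z. lead_coeff (T z)) xs))"
      using cm by (simp add: lead_pl norm_mult)
    also have "\<dots> = A" unfolding cmod_pl leadT A_def ..
    finally show ?thesis .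
  qed
  have FB: "cmod (coeff F 0) = B"
  proof -
    have "coeff F 0 = c * poly (prod_list (map T xs)) 0" unfolding F_def by (simp add: poly_0_coeff_0[symmetric])
    then have "cmod (coeff F 0) = cmod (prod_list (map (\<lambda>z. poly (T z) 0) xs))"
      using cm by (simp add: poly_pl norm_mult)
    also have "\<dots> = B" unfolding cmod_pl polyT B_def ..
    finally show ?thesis .
  qed
  have AB: "A * B = 1"
  proof -
    have "coeff f 0 = c * poly (prod_list (map (\<lambda>z. [:-z,1:]) xs)) 0"
      by (subst f) (simp add: poly_0_coeff_0[symmetric])
    then have "1 = cmod (prod_list (map (\<lambda>z. poly [:-z,1:] 0) xs))"
      using cm c0 by (simp add: poly_pl norm_mult)
    also have "\<dots> = prod_list (map (\<lambda>z. g1 z * g2 z) xs)" unfolding cmod_pl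
    proof -
      have "(\<lambda>z. cmod (poly [:-z,1:] 0)) = (\<lambda>z. g1 z * g2 z)"
        by (rule ext) (simp add: g1_def g2_def)
      then show "prod_list (map (\<lambda>z. cmod (poly [:-z,1:] 0)) xs) = prod_list (map (\<lambda>z. g1 z * g2 z) xs)"
        by (simp only:)
    qed
    also have "\<dots> = A * B" unfolding pl_mult A_def B_def ..
    finally show ?thesis by simp
  qed
  have ratio: "\<forall>z\<in>set xs. g1 z / g2 z > p"
  proof
    fix z assume z: "z \<in> set xs"
    have "cmod z > 0" using znz[OF z] by simp
    then show "g1 z / g2 z > p" using out[OF z] p1 less_1_mult[of p "cmod z"]
      by (auto simp: g1_def g2_def field_simps)
  qed
  have "prod_list (map (\<lambda>z. g1 z / g2 z) xs) > p ^ length xs"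
    using pl_gt[OF ratio] p1 len d1 by auto
  then have AB2: "A / B > p ^ d" unfolding pl_div A_def B_def len by simp
  have Bpos: "B > 0"
  proof -
    have "B \<ge> 0" unfolding B_def by (induction xs) (auto simp: g2_def)
    then show ?thesis using AB by (cases "B = 0") auto
  qed
  have Anz: "A \<noteq> 0" using AB by auto
  have Ainv: "B = 1 / A" using AB Anz by (simp add: eq_divide_eq mult.commute)
  define t where "t = A / B"
  have tA: "t = A^2" unfolding t_def using Ainv AB by (simp add: power2_eq_square field_simps)
  have tinv: "1 / t = B^2" unfolding t_def using Ainv AB Bpos by (simp add: power2_eq_square field_simps)
  have lowF: "A^2 + B^2 \<le> nsq F"
  proof -
    have "(\<Sum>i\<in>{0,d}. (cmod (coeff F i))^2) \<le> (\<Sum>i\<le>d. (cmod (coeff F i))^2)"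
      by (rule sum_mono2) auto
    moreover have "(\<Sum>i\<in>{0,d}. (cmod (coeff F i))^2) = A^2 + B^2" using d1 FA FB by simp
    ultimately show ?thesis unfolding nsq_def degF by simp
  qed
  have upf: "nsq f \<le> real d + 1"
  proof -
    have "nsq f \<le> (\<Sum>i\<le>d. 1)" unfolding nsq_def deg
      by (rule sum_mono) (use cb in \<open>auto intro: power_le_one\<close>)
    then show ?thesis by simp
  qed
  have "t + 1/t \<le> real d + 1" using tA tinv lowF upf nsqF by simp
  moreover have "t > ((sqrt 5 + 1) / 2) ^ d" using AB2 t_def p_def by simp
  ultimately show False using arith_contra d1 by blast
qed



lemma sq_step: fixes a b x :: real
  assumes "b \<le> a^2" "0 \<le> a" "a \<le> x ^ n" shows "b \<le> x ^ (2*n)"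
proof -
  have "a^2 \<le> (x^n)^2" using assms by (intro power_mono) auto
  also have "\<dots> = x ^ (2*n)" by (simp add: power_mult[symmetric] mult.commute)
  finally show ?thesis using assms(1) by linarith
qed

lemma ln_phi: "ln ((sqrt 5 + 1) / 2) < (0.482::real)"
proof -
  define y :: real where "y = 1 + 0.482 / real 256"
  have yv: "y = 128241/128000" unfolding y_def by simp
  have e: "y ^ 256 \<le> exp 0.482" unfolding y_def
    by (rule exp_ge_one_plus_x_over_n_power_n) auto
  have s1: "1.003769169 \<le> y ^ 2" unfolding yv by (simp add: power2_eq_square)
  have s2: "1.007552544 \<le> y ^ 4" using sq_step[of "1.007552544" "1.003769169" y "2"] s1 by (simp add: power2_eq_square)
  have s3: "1.015162128 \<le> y ^ 8" using sq_step[of "1.015162128" "1.007552544" y "4"] s2 by (simp add: power2_eq_square)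
  have s4: "1.030554146 \<le> y ^ 16" using sq_step[of "1.030554146" "1.015162128" y "8"] s3 by (simp add: power2_eq_square)
  have s5: "1.062041847 \<le> y ^ 32" using sq_step[of "1.062041847" "1.030554146" y "16"] s4 by (simp add: power2_eq_square)
  have s6: "1.127932884 \<le> y ^ 64" using sq_step[of "1.127932884" "1.062041847" y "32"] s5 by (simp add: power2_eq_square)
  have s7: "1.27223259 \<le> y ^ 128" using sq_step[of "1.27223259" "1.127932884" y "64"] s6 by (simp add: power2_eq_square)
  have s8: "1.618575763 \<le> y ^ 256" using sq_step[of "1.618575763" "1.27223259" y "128"] s7 by (simp add: power2_eq_square)
  have "sqrt 5 < (2.237151526::real)" by (rule real_less_lsqrt) (simp_all add: power2_eq_square)
  then have "(sqrt 5 + 1) / 2 < exp 0.482" using s8 e by simp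
  moreover have "(sqrt 5 + 1) / 2 > (0::real)" by (simp add: add_pos_nonneg)
  ultimately show ?thesis by (metis exp_less_cancel_iff exp_ln)
qed

lemma gpart: "(let g = [:-1, -1, 1:] :: complex poly in
        (SUP \<sigma>\<in>ArchTrop g. INF \<rho>\<in>Amoeba g. \<bar>\<rho> - \<sigma>\<bar>) = ln ((sqrt 5 + 1) / 2))"
proof -
  define g :: "complex poly" where "g = [:-1, -1, 1:]"
  define p :: real where "p = (sqrt 5 + 1) / 2"
  note ph = phi[folded p_def]
  have p1: "p > 1" using ph(2) by simp
  have dg: "degree g = 2" unfolding g_def by simp
  have cb: "\<forall>i. cmod (coeff g i) \<le> 1"
  proof
    fix i :: nat
    consider "i = 0" | "i = 1" | "i = 2" | "i \<ge> 3" by linarith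
    then show "cmod (coeff g i) \<le> 1"
    proof cases
      case 4 then have "coeff g i = 0" using dg by (intro coeff_eq_0) simp
      then show ?thesis by simp
    qed (simp_all add: g_def numeral_2_eq_2)
  qed
  have AT: "ArchTrop g = {0}"
    using geom[OF dg _ cb] by (simp add: g_def numeral_2_eq_2)
  have pp: "complex_of_real p * complex_of_real p = complex_of_real p + 1"
    using ph(1) by (metis of_real_add of_real_mult of_real_1 power2_eq_square)
  have fac: "poly g z = (z - of_real p) * (z - of_real (1 - p))" for z
    unfolding g_def using pp by (simp add: algebra_simps)
  have roots: "poly g z = 0 \<longleftrightarrow> z = of_real p \<or> z = of_real (1 - p)" for z
    unfolding fac by simp
  have pm1: "p - 1 = 1 / p" using ph(3) p1 by (simp add: field_simps)
  have Am: "Amoeba g = {ln p, - ln p}"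
  proof -
    have "Amoeba g = {ln (cmod z) | z. z = of_real p \<or> z = of_real (1 - p)}"
      unfolding Amoeba_def roots using p1 by auto
    also have "\<dots> = {ln (cmod (complex_of_real p)), ln (cmod (complex_of_real (1 - p)))}" by blast
    also have "\<dots> = {ln p, ln (p - 1)}" using p1 by (simp only: norm_of_real) simp
    also have "ln (p - 1) = - ln p" unfolding pm1 using p1 by (simp add: ln_div)
    finally show ?thesis .
  qed
  have lp: "ln p > 0" using p1 by simp
  have "(SUP \<sigma>\<in>ArchTrop g. INF \<rho>\<in>Amoeba g. \<bar>\<rho> - \<sigma>\<bar>) = ln p"
    unfolding AT Am using lp by simp
  then show ?thesis unfolding g_def p_def Let_def by simp
qed


theorem corollary2p2:
  fixes f :: "complex poly" and d :: nat
  assumes "degree f = d" and "d \<ge> 1"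
    and "\<forall>i. cmod (coeff f i) \<le> 1"
    and "cmod (coeff f 0) = 1" and "cmod (coeff f d) = 1"
  shows "(\<exists>!E. lower_edge (ArchNewt f) E)
    \<and> (\<forall>E. lower_edge (ArchNewt f) E \<longrightarrow> horizontal E)
    \<and> ArchTrop f = {0}
    \<and> (SUP \<sigma>\<in>ArchTrop f. INF \<rho>\<in>Amoeba f. \<bar>\<rho> - \<sigma>\<bar>) \<le> ln ((sqrt 5 + 1) / 2)
    \<and> ln ((sqrt 5 + 1) / 2) < (0.482::real)
    \<and> (let g = [:-1, -1, 1:] :: complex poly in
        (SUP \<sigma>\<in>ArchTrop g. INF \<rho>\<in>Amoeba g. \<bar>\<rho> - \<sigma>\<bar>) = ln ((sqrt 5 + 1) / 2))"
proof -
  have G: "(\<exists>!E. lower_edge (ArchNewt f) E)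
    \<and> (\<forall>E. lower_edge (ArchNewt f) E \<longrightarrow> horizontal E)
    \<and> ArchTrop f = {0}" by (rule geom[OF assms])
  then have AT: "ArchTrop f = {0}" by blast
  obtain z where z: "z \<noteq> 0" "poly f z = 0" "\<bar>ln (cmod z)\<bar> \<le> ln ((sqrt 5 + 1) / 2)"
    using root_exists[OF assms] by blast
  have "ln (cmod z) \<in> Amoeba f" unfolding Amoeba_def using z by blast
  then have "(INF \<rho>\<in>Amoeba f. \<bar>\<rho> - 0\<bar>) \<le> \<bar>ln (cmod z) - 0\<bar>"
    by (intro cINF_lower) (auto intro: bdd_belowI[of _ 0])
  then have S: "(SUP \<sigma>\<in>ArchTrop f. INF \<rho>\<in>Amoeba f. \<bar>\<rho> - \<sigma>\<bar>) \<le> ln ((sqrt 5 + 1) / 2)"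
    unfolding AT using z by simp
  show ?thesis using G S ln_phi gpart by blast
qed

end
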